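(* Let $\rho,T>0$, $\theta\ge0$, $N\ge2$, $\alpha:=e^{-\rho T/N}$, $\kappa:=2\theta+\frac12$, and let $\bm\omega,\bm\nu,\delta_k,\phi_k$ be as in the context. Then for all $i\in\{1,\dots,N+1\}$, $$\omega_i=\frac{(1-\alpha)\kappa+\alpha\big(\frac{\alpha(\kappa-1)}{\kappa}\big)^{N+1-i}}{\kappa(\kappa-\alpha(\kappa-1))},$$ in particular $\omega_{N+1}=1/\kappa$. Moreover, $$\nu_1=\frac{1-\alpha}{\delta_{N+1}}\Big(\phi_2+(1-\alpha)\sum_{j=2}^N(\alpha\kappa)^{j-1}\phi_{j+1}+(\alpha\kappa)^N\Big),$$ $$\nu_{N+1}=\frac{1-\alpha}{\delta_{N+1}}\Big((\alpha(\kappa-1))^N+(1-\alpha)\sum_{j=2}^N(\alpha(\kappa-1))^{N+1-j}\delta_{j-1}+\delta_N\Big),$$ and for $i=2,\dots,N$, $$\nu_i=\frac{1-\alpha}{\delta_{N+1}}\Big((\alpha(\kappa-1))^{i-1}\phi_{i+1}+(1-\alpha)\sum_{j=2}^{i-1}(\alpha(\kappa-1))^{i-j}\delta_{j-1}\phi_{i+1}+(1-\alpha)\sum_{j=i}^N(\alpha\kappa)^{j-i}\delta_{i-1}\phi_{j+1}+(\alpha\kappa)^{N+1-i}\delta_{i-1}\Big).$$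
   Context: Let $\tilde\Gamma$ be the $(N+1)\times(N+1)$ lower triangular matrix with $\tilde\Gamma_{ij}=0$ for $i<j$, $\tilde\Gamma_{ii}=1/2$, $\tilde\Gamma_{ij}=\alpha^{i-j}$ for $i>j$, $\Gamma:=\tilde\Gamma+\tilde\Gamma^\top$, $\bm\nu=(\nu_1,\dots,\nu_{N+1})^\top:=(\Gamma+\tilde\Gamma+2\theta\mathrm{Id})^{-1}\mathbf1$ and $\bm\omega=(\omega_1,\dots,\omega_{N+1})^\top:=(\Gamma-\tilde\Gamma+2\theta\mathrm{Id})^{-1}\mathbf1$ (both matrices are invertible), where $\mathbf1$ is the all-ones vector. Let $B:=(1-\alpha^2)(\mathrm{Id}+\Gamma^{-1}(\tilde\Gamma+2\theta\mathrm{Id}))$ (a tridiagonal matrix with diagonal $(1-2\alpha^2+\kappa,1+\alpha^2(\kappa-2)+\kappa,\dots,1+\alpha^2(\kappa-2)+\kappa,1-\alpha^2+\kappa)$, superdiagonal $-\alpha\kappa$, subdiagonal $-\alpha(\kappa-1)$); $\delta_k$ ($1\le k\le N+1$) is its $k$-th leading principal minor and $\delta_0:=1$. Define $\phi_{N+2}:=1$, $\phi_{N+1}:=1-\alpha^2+\kappa$ and $\phi_k:=(1+\alpha^2(\kappa-2)+\kappa)\phi_{k+1}-\alpha^2\kappa(\kappa-1)\phi_{k+2}$ for $k=N,\dots,2$. *)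

theory Defs
  imports "Jordan_Normal_Form.Matrix" "Jordan_Normal_Form.Determinant"
begin

text \<open>All matrices are (N+1) x (N+1) JNF matrices; paper index i (1..N+1) corresponds
  to JNF index i-1.\<close>

definition minv :: "nat \<Rightarrow> real mat \<Rightarrow> real mat" where
  "minv n A = (THE B. B \<in> carrier_mat n n \<and> A * B = 1\<^sub>m n \<and> B * A = 1\<^sub>m n)"

definition GammaT :: "nat \<Rightarrow> real \<Rightarrow> real mat" where
  "GammaT N \<alpha> = mat (N+1) (N+1) (\<lambda>(i,j). if i < j then 0 else if i = j then 1/2 else \<alpha> ^ (i - j))"

definition Gamma :: "nat \<Rightarrow> real \<Rightarrow> real mat" where
  "Gamma N \<alpha> = GammaT N \<alpha> + (GammaT N \<alpha>)\<^sup>T"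

definition nu_vec :: "nat \<Rightarrow> real \<Rightarrow> real \<Rightarrow> real vec" where
  "nu_vec N \<alpha> \<theta> = minv (N+1) (Gamma N \<alpha> + GammaT N \<alpha> + (2*\<theta>) \<cdot>\<^sub>m 1\<^sub>m (N+1)) *\<^sub>v vec (N+1) (\<lambda>_. 1)"

definition omega_vec :: "nat \<Rightarrow> real \<Rightarrow> real \<Rightarrow> real vec" where
  "omega_vec N \<alpha> \<theta> = minv (N+1) (Gamma N \<alpha> - GammaT N \<alpha> + (2*\<theta>) \<cdot>\<^sub>m 1\<^sub>m (N+1)) *\<^sub>v vec (N+1) (\<lambda>_. 1)"

definition nu :: "nat \<Rightarrow> real \<Rightarrow> real \<Rightarrow> nat \<Rightarrow> real" where
  "nu N \<alpha> \<theta> i = nu_vec N \<alpha> \<theta> $ (i - 1)"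

definition omega :: "nat \<Rightarrow> real \<Rightarrow> real \<Rightarrow> nat \<Rightarrow> real" where
  "omega N \<alpha> \<theta> i = omega_vec N \<alpha> \<theta> $ (i - 1)"

definition Bmat :: "nat \<Rightarrow> real \<Rightarrow> real \<Rightarrow> real mat" where
  "Bmat N \<alpha> \<theta> = (1 - \<alpha>^2) \<cdot>\<^sub>m (1\<^sub>m (N+1) + minv (N+1) (Gamma N \<alpha>) * (GammaT N \<alpha> + (2*\<theta>) \<cdot>\<^sub>m 1\<^sub>m (N+1)))"

text \<open>k-th leading principal minor of B (delta 0 = 1, determinant of the empty matrix)\<close>
definition delta :: "nat \<Rightarrow> real \<Rightarrow> real \<Rightarrow> nat \<Rightarrow> real" where
  "delta N \<alpha> \<theta> k = det (mat k k (\<lambda>(i,j). Bmat N \<alpha> \<theta> $$ (i,j)))"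

text \<open>phi_aux m = phi_{N+2-m}\<close>
fun phi_aux :: "real \<Rightarrow> real \<Rightarrow> nat \<Rightarrow> real" where
  "phi_aux \<alpha> \<kappa> 0 = 1"
| "phi_aux \<alpha> \<kappa> (Suc 0) = 1 - \<alpha>^2 + \<kappa>"
| "phi_aux \<alpha> \<kappa> (Suc (Suc m)) =
     (1 + \<alpha>^2 * (\<kappa> - 2) + \<kappa>) * phi_aux \<alpha> \<kappa> (Suc m) - \<alpha>^2 * \<kappa> * (\<kappa> - 1) * phi_aux \<alpha> \<kappa> m"

definition phi :: "nat \<Rightarrow> real \<Rightarrow> real \<Rightarrow> nat \<Rightarrow> real" where
  "phi N \<alpha> \<kappa> k = phi_aux \<alpha> \<kappa> (N + 2 - k)"

end

theory Submission
  imports Defs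
begin


lemma minv_eq:
  assumes A: "A \<in> carrier_mat n n" and B: "B \<in> carrier_mat n n" and AB: "A * B = 1\<^sub>m n"
  shows "minv n A = B"
proof -
  have BA: "B * A = 1\<^sub>m n" by (rule mat_mult_left_right_inverse[OF A B AB])
  show ?thesis unfolding minv_def
  proof (rule the_equality)
    show "B \<in> carrier_mat n n \<and> A * B = 1\<^sub>m n \<and> B * A = 1\<^sub>m n" using B AB BA by auto
  next
    fix C assume C: "C \<in> carrier_mat n n \<and> A * C = 1\<^sub>m n \<and> C * A = 1\<^sub>m n"
    from C have Cc: "C \<in> carrier_mat n n" and CA: "C * A = 1\<^sub>m n" by auto
    have 1: "C * (A * B) = C" using AB right_mult_one_mat[OF Cc] by simp
    have 2: "C * (A * B) = (C * A) * B" using assoc_mult_mat[OF Cc A B] by simp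
    have 3: "(C * A) * B = B" using CA left_mult_one_mat[OF B] by simp
    show "C = B" using 1 2 3 by simp
  qed
qed

lemma det_inv_exists:
  assumes A: "A \<in> carrier_mat n n" and d: "det A \<noteq> (0::real)"
  shows "\<exists>B. B \<in> carrier_mat n n \<and> A * B = 1\<^sub>m n"
proof -
  have "A \<in> Units (ring_mat TYPE(real) n undefined)" by (rule det_non_zero_imp_unit[OF A d])
  thus ?thesis unfolding Units_def ring_mat_def by auto
qed

lemma minv_solve:
  assumes A: "A \<in> carrier_mat n n" and d: "det A \<noteq> (0::real)"
    and x: "x \<in> carrier_vec n" and Ax: "A *\<^sub>v x = b"
  shows "minv n A *\<^sub>v b = x"
proof -
  obtain B where B: "B \<in> carrier_mat n n" "A * B = 1\<^sub>m n" using det_inv_exists[OF A d] by auto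
  have m: "minv n A = B" using minv_eq[OF A B(1) B(2)] .
  have BA: "B * A = 1\<^sub>m n" by (rule mat_mult_left_right_inverse[OF A B])
  have "B *\<^sub>v b = B *\<^sub>v (A *\<^sub>v x)" using Ax by simp
  also have "\<dots> = (B * A) *\<^sub>v x" using A B x by (simp add: assoc_mult_mat_vec)
  also have "\<dots> = x" using BA x by simp
  finally show ?thesis using m by simp
qed

lemma sum_tri:
  fixes g :: "nat \<Rightarrow> real"
  assumes j: "j < n" and z: "\<And>k. k < n \<Longrightarrow> k \<noteq> j \<Longrightarrow> k \<noteq> j+1 \<Longrightarrow> k+1 \<noteq> j \<Longrightarrow> g k = 0"
  shows "(\<Sum>k<n. g k) = g j + (if j+1<n then g (j+1) else 0) + (if j>0 then g (j-1) else 0)"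
proof -
  let ?S = "{j} \<union> (if j+1<n then {j+1} else {}) \<union> (if j>0 then {j-1} else {})"
  have "(\<Sum>k<n. g k) = (\<Sum>k\<in>?S. g k)"
    by (rule sum.mono_neutral_right) (use j in \<open>auto split: if_splits intro!: z\<close>)
  also have "\<dots> = g j + (if j+1<n then g (j+1) else 0) + (if j>0 then g (j-1) else 0)"
    using j by (cases "j+1<n"; cases "j>0") (auto simp: sum.insert_if)
  finally show ?thesis .
qed


definition Gi :: "nat \<Rightarrow> real \<Rightarrow> real mat" where
  "Gi N \<alpha> = mat (N+1) (N+1) (\<lambda>(i,j). (if i = j then (if i = 0 \<or> i = N then 1 else 1+\<alpha>^2)
      else if j = i+1 \<or> i = j+1 then -\<alpha> else 0) / (1-\<alpha>^2))"

lemma Gamma_carrier: "Gamma N \<alpha> \<in> carrier_mat (N+1) (N+1)"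
  unfolding Gamma_def GammaT_def by auto

lemma GammaT_carrier: "GammaT N \<alpha> \<in> carrier_mat (N+1) (N+1)"
  unfolding GammaT_def by auto

lemma Gi_carrier: "Gi N \<alpha> \<in> carrier_mat (N+1) (N+1)"
  unfolding Gi_def by auto

lemma Gamma_entry: "i < N+1 \<Longrightarrow> j < N+1 \<Longrightarrow>
  Gamma N \<alpha> $$ (i,j) = (if i \<le> j then \<alpha>^(j-i) else \<alpha>^(i-j))"
  unfolding Gamma_def GammaT_def by auto

lemma GammaT_entry: "i < N+1 \<Longrightarrow> j < N+1 \<Longrightarrow>
  GammaT N \<alpha> $$ (i,j) = (if i < j then 0 else if i = j then 1/2 else \<alpha>^(i-j))"
  unfolding GammaT_def by auto

lemma Gi_entry: "i < N+1 \<Longrightarrow> j < N+1 \<Longrightarrow> Gi N \<alpha> $$ (i,j) =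
   (if i = j then (if i = 0 \<or> i = N then 1 else 1+\<alpha>^2)
      else if j = i+1 \<or> i = j+1 then -\<alpha> else 0) / (1-\<alpha>^2)"
  unfolding Gi_def by auto

lemma mat_mult_entry: "A \<in> carrier_mat n n \<Longrightarrow> B \<in> carrier_mat n n \<Longrightarrow> i < n \<Longrightarrow> j < n \<Longrightarrow>
  (A * B) $$ (i,j) = (\<Sum>k<n. A $$ (i,k) * B $$ (k,j))"
  by (simp add: scalar_prod_def atLeast0LessThan)

lemma mat_vec_entry: "A \<in> carrier_mat n n \<Longrightarrow> v \<in> carrier_vec n \<Longrightarrow> i < n \<Longrightarrow>
  (A *\<^sub>v v) $ i = (\<Sum>k<n. A $$ (i,k) * v $ k)"
  by (simp add: scalar_prod_def atLeast0LessThan)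

lemma Gamma_Gi:
  assumes a0: "0 < \<alpha>" and a1: "\<alpha> < 1" and N1: "N \<ge> 1"
  shows "Gamma N \<alpha> * Gi N \<alpha> = 1\<^sub>m (N+1)"
proof (rule eq_matI)
  fix i j assume i: "i < dim_row (1\<^sub>m (N+1))" and j: "j < dim_col (1\<^sub>m (N+1))"
  hence i: "i < N+1" and j: "j < N+1" by auto
  define c where "c = 1 - \<alpha>^2"
  have "\<alpha>^2 < 1" using a0 a1 by (simp add: power_less_one_iff)
  hence c: "c \<noteq> 0" unfolding c_def by simp
  let ?g = "\<lambda>k. Gamma N \<alpha> $$ (i,k) * Gi N \<alpha> $$ (k,j)"
  have "(Gamma N \<alpha> * Gi N \<alpha>) $$ (i,j) = (\<Sum>k<N+1. ?g k)"
    by (rule mat_mult_entry[OF Gamma_carrier Gi_carrier i j])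
  also have "\<dots> = ?g j + (if j+1<N+1 then ?g (j+1) else 0) + (if j>0 then ?g (j-1) else 0)"
    by (rule sum_tri[OF j]) (use j in \<open>auto simp: Gi_entry\<close>)
  also have "\<dots> = (if i = j then 1 else 0)"
  proof -
    have G1: "Gi N \<alpha> $$ (j,j) = (if j = 0 \<or> j = N then 1 else 1 + \<alpha>^2) / c"
      using j by (simp add: Gi_entry c_def)
    have G2: "j+1 < N+1 \<Longrightarrow> Gi N \<alpha> $$ (Suc j,j) = -\<alpha> / c"
      using j by (simp add: Gi_entry c_def)
    have G3: "j > 0 \<Longrightarrow> Gi N \<alpha> $$ (j - Suc 0,j) = -\<alpha> / c"
      using j by (auto simp add: Gi_entry c_def)
    consider (lt) d where "j = i + d + 1" | (eq) "i = j" | (gt) d where "i = j + d + 1"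
      by (metis add.commute less_imp_Suc_add linorder_neqE_nat plus_1_eq_Suc)
    thus ?thesis
    proof cases
      case lt
      have E1: "Gamma N \<alpha> $$ (i,j) = \<alpha>^(d+1)" using lt i j by (simp add: Gamma_entry)
      have E2: "j+1 < N+1 \<Longrightarrow> Gamma N \<alpha> $$ (i,Suc j) = \<alpha>^(d+2)" using lt i j by (simp add: Gamma_entry)
      have E3: "Gamma N \<alpha> $$ (i,j - Suc 0) = \<alpha>^d" using lt i j by (simp add: Gamma_entry)
      have j0: "j > 0" "j \<noteq> 0" using lt by auto
      show ?thesis
      proof (cases "j = N")
        case True
        thus ?thesis using c j0 lt E1 E3 G1 G3 by (simp; simp add: field_simps)
      next
        case False
        hence jN: "j+1 < N+1" using j by simp
        have "?g j + ?g (j+1) + ?g (j-1) = (\<alpha>^(d+1) * (1+\<alpha>^2) - \<alpha>^(d+2)*\<alpha> - \<alpha>^d * \<alpha>) / c"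
          using c E1 E2[OF jN] E3 G1 G2[OF jN] G3 j0 False by (simp; simp add: field_simps)
        also have "\<dots> = 0" by (simp add: algebra_simps power2_eq_square)
        finally show ?thesis using jN j0 lt by simp
      qed
    next
      case eq
      have E1: "Gamma N \<alpha> $$ (i,j) = 1" using eq i j by (simp add: Gamma_entry)
      have E2: "j+1 < N+1 \<Longrightarrow> Gamma N \<alpha> $$ (i,Suc j) = \<alpha>" using eq i j by (simp add: Gamma_entry)
      have E3: "j > 0 \<Longrightarrow> Gamma N \<alpha> $$ (i,j - Suc 0) = \<alpha>" using eq i j by (simp add: Gamma_entry)
      consider (z) "j = 0" | (l) "j = N" | (m) "0 < j" "j < N" using j by linarith
      thus ?thesis
      proof cases
        case z
        hence jN: "j+1 < N+1" using N1 by simp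
        show ?thesis using c z jN eq E1 E2[OF jN] G1 G2[OF jN] by (simp; simp add: field_simps; simp add: c_def power2_eq_square; simp add: algebra_simps)
      next
        case l
        hence j0: "j > 0" using N1 by simp
        show ?thesis using c l j0 E1 E3[OF j0] G1 G3[OF j0] eq by (simp; simp add: field_simps; simp add: c_def power2_eq_square; simp add: algebra_simps)
      next
        case m
        hence jN: "j+1 < N+1" by simp
        show ?thesis using c m jN E1 E2[OF jN] E3 G1 G2[OF jN] G3 eq by (simp; simp add: field_simps; simp add: c_def power2_eq_square; simp add: algebra_simps)
      qed
    next
      case gt
      have E1: "Gamma N \<alpha> $$ (i,j) = \<alpha>^(d+1)" using gt i j by (simp add: Gamma_entry)
      have E2: "Gamma N \<alpha> $$ (i,Suc j) = \<alpha>^d" using gt i j by (simp add: Gamma_entry)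
      have E3: "j > 0 \<Longrightarrow> Gamma N \<alpha> $$ (i,j - Suc 0) = \<alpha>^(d+2)" using gt i j
        by (auto simp add: Gamma_entry intro!: arg_cong[of _ _ "\<lambda>x. \<alpha>^x"])
      have jN: "j+1 < N+1" "j \<noteq> N" using gt i by auto
      show ?thesis
      proof (cases "j = 0")
        case True
        have "?g j + ?g (j+1) = (\<alpha>^(d+1) - \<alpha>^d * \<alpha>) / c"
          using c E1 E2 G1 G2[OF jN(1)] True by (simp; simp add: field_simps)
        also have "\<dots> = 0" by (simp add: algebra_simps)
        finally show ?thesis using jN True gt by simp
      next
        case False
        hence j0: "j > 0" by simp
        have "?g j + ?g (j+1) + ?g (j-1) = (\<alpha>^(d+1) * (1+\<alpha>^2) - \<alpha>^d*\<alpha> - \<alpha>^(d+2) * \<alpha>) / c"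
          using c E1 E2 E3[OF j0] G1 G2[OF jN(1)] G3[OF j0] jN False by (simp; simp add: field_simps)
        also have "\<dots> = 0" by (simp add: algebra_simps power2_eq_square)
        finally show ?thesis using jN j0 gt by simp
      qed
    qed
  qed
  finally show "(Gamma N \<alpha> * Gi N \<alpha>) $$ (i,j) = 1\<^sub>m (N+1) $$ (i,j)" using i j by simp
qed (use Gamma_carrier[of N \<alpha>] Gi_carrier[of N \<alpha>] in \<open>auto\<close>)


lemma minv_Gamma: "0 < \<alpha> \<Longrightarrow> \<alpha> < 1 \<Longrightarrow> N \<ge> 1 \<Longrightarrow> minv (N+1) (Gamma N \<alpha>) = Gi N \<alpha>"
  by (rule minv_eq[OF Gamma_carrier Gi_carrier Gamma_Gi])

lemma Gi_diag: "i < N+1 \<Longrightarrow> Gi N \<alpha> $$ (i,i) = (if i = 0 \<or> i = N then 1 else 1+\<alpha>^2) / (1-\<alpha>^2)"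
  by (simp add: Gi_entry)
lemma Gi_up: "Suc i < N+1 \<Longrightarrow> Gi N \<alpha> $$ (i,Suc i) = -\<alpha> / (1-\<alpha>^2)"
  by (simp add: Gi_entry)
lemma Gi_dn: "0 < i \<Longrightarrow> i < N+1 \<Longrightarrow> Gi N \<alpha> $$ (i,i - Suc 0) = -\<alpha> / (1-\<alpha>^2)"
  by (auto simp add: Gi_entry)

definition bt :: "nat \<Rightarrow> real \<Rightarrow> real \<Rightarrow> nat \<Rightarrow> nat \<Rightarrow> real" where
  "bt N \<alpha> \<kappa> i j = (if i = j then (if i = 0 then 1 - 2*\<alpha>^2 + \<kappa> else if i = N then 1 - \<alpha>^2 + \<kappa>
      else 1 + \<alpha>^2*(\<kappa>-2) + \<kappa>) else if j = Suc i then -(\<alpha>*\<kappa>) else if i = Suc j then -(\<alpha>*(\<kappa>-1)) else 0)"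

definition Tm :: "nat \<Rightarrow> real \<Rightarrow> real \<Rightarrow> real mat" where
  "Tm N \<alpha> \<theta> = GammaT N \<alpha> + (2*\<theta>) \<cdot>\<^sub>m 1\<^sub>m (N+1)"

lemma Tm_carrier: "Tm N \<alpha> \<theta> \<in> carrier_mat (N+1) (N+1)"
  unfolding Tm_def GammaT_def by auto

lemma Tm_entry: "k < N+1 \<Longrightarrow> j < N+1 \<Longrightarrow>
  Tm N \<alpha> \<theta> $$ (k,j) = (if k < j then 0 else if k = j then 2*\<theta>+1/2 else \<alpha>^(k-j))"
  unfolding Tm_def GammaT_def by auto

lemma Bkey:
  assumes c: "(1-\<alpha>^2) \<noteq> 0" and N1: "N \<ge> 1" and i: "i < N+1"
  shows "(1-\<alpha>^2) * ((if i = j then 1 else 0) + (Gi N \<alpha> $$ (i,i) * X + (if i+1 < N+1 then Gi N \<alpha> $$ (i,i+1) * Y else 0)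
     + (if 0 < i then Gi N \<alpha> $$ (i, i-1) * Z else 0)))
   = (if i = j then 1-\<alpha>^2 else 0) + (if i = 0 \<or> i = N then 1 else 1+\<alpha>^2) * X - (if Suc i < N+1 then \<alpha> * Y else 0) - (if 0 < i then \<alpha> * Z else 0)"
proof -
  define c where "c = 1 - \<alpha>^2"
  have c0: "c \<noteq> 0" using c c_def by simp
  have e: "\<And>a. c * (a / c) = a" using c0 by simp
  show ?thesis using N1 i c0 unfolding c_def[symmetric]
    by (cases "Suc i < N+1"; cases "i > 0") (simp_all add: Gi_diag Gi_up Gi_dn c_def[symmetric] distrib_left right_diff_distrib e)
qed

lemma Bmat_entry:
  assumes a0: "0 < \<alpha>" and a1: "\<alpha> < 1" and N1: "N \<ge> 1" and i: "i < N+1" and j: "j < N+1"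
  shows "Bmat N \<alpha> \<theta> $$ (i,j) = bt N \<alpha> (2*\<theta>+1/2) i j"
proof -
  define c where "c = 1 - \<alpha>^2"
  define \<kappa> where "\<kappa> = 2*\<theta>+1/2"
  have "\<alpha>^2 < 1" using a0 a1 by (simp add: power_less_one_iff)
  hence c: "c \<noteq> 0" unfolding c_def by simp
  define gd where "gd = (if i = 0 \<or> i = N then 1 else 1 + \<alpha>^2)"
  let ?T = "Tm N \<alpha> \<theta>"
  let ?g = "\<lambda>k. Gi N \<alpha> $$ (i,k) * ?T $$ (k,j)"
  have B: "Bmat N \<alpha> \<theta> = c \<cdot>\<^sub>m (1\<^sub>m (N+1) + Gi N \<alpha> * ?T)"
    unfolding Bmat_def c_def Tm_def minv_Gamma[OF a0 a1 N1] by simp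
  have "(Gi N \<alpha> * ?T) $$ (i,j) = (\<Sum>k<N+1. ?g k)"
    by (rule mat_mult_entry[OF Gi_carrier Tm_carrier i j])
  also have "\<dots> = ?g i + (if i+1<N+1 then ?g (i+1) else 0) + (if i>0 then ?g (i-1) else 0)"
    by (rule sum_tri[OF i]) (use i in \<open>auto simp: Gi_entry\<close>)
  finally have S: "(Gi N \<alpha> * ?T) $$ (i,j) = ?g i + (if i+1<N+1 then ?g (i+1) else 0) + (if i>0 then ?g (i-1) else 0)" .
  have G1: "Gi N \<alpha> $$ (i,i) = gd / c" using i by (simp add: Gi_entry c_def gd_def)
  have G2: "Suc i < N+1 \<Longrightarrow> Gi N \<alpha> $$ (i,Suc i) = -\<alpha> / c" using i by (simp add: Gi_entry c_def)
  have G3: "i > 0 \<Longrightarrow> Gi N \<alpha> $$ (i,i - Suc 0) = -\<alpha> / c" using i by (auto simp add: Gi_entry c_def)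
  have key: "Bmat N \<alpha> \<theta> $$ (i,j) = (if i = j then c else 0) + gd * ?T $$ (i,j)
     - (if Suc i < N+1 then \<alpha> * ?T $$ (Suc i,j) else 0) - (if i > 0 then \<alpha> * ?T $$ (i - Suc 0,j) else 0)"
  proof -
    have "Bmat N \<alpha> \<theta> $$ (i,j) = c * ((if i = j then 1 else 0) + (Gi N \<alpha> * ?T) $$ (i,j))"
      unfolding B using i j Gi_carrier[of N \<alpha>] Tm_carrier[of N \<alpha> \<theta>] by simp
    also have "\<dots> = (if i = j then c else 0) + gd * ?T $$ (i,j)
     - (if Suc i < N+1 then \<alpha> * ?T $$ (Suc i,j) else 0) - (if i > 0 then \<alpha> * ?T $$ (i - Suc 0,j) else 0)"
      unfolding S c_def gd_def using Bkey[OF c[unfolded c_def] N1 i] by simp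
    finally show ?thesis .
  qed
  have T: "\<And>k. k < N+1 \<Longrightarrow> ?T $$ (k,j) = (if k < j then 0 else if k = j then \<kappa> else \<alpha>^(k-j))"
    using j by (simp add: Tm_entry \<kappa>_def)
  consider (far) "Suc (Suc i) \<le> j" | (up) "j = Suc i" | (eq) "j = i" | (lo) "i = Suc j" | (low) e where "i = j + e + 2"
    by (metis add_2_eq_Suc' add.commute le_add1 le_less_Suc_eq less_Suc_eq less_imp_Suc_add linorder_not_le not_less_eq)
  thus ?thesis
  proof cases
    case far
    thus ?thesis unfolding key using i j T by (auto simp: bt_def)
  next
    case up
    thus ?thesis unfolding key using i j T by (auto simp: bt_def \<kappa>_def)
  next
    case eq
    consider (z) "i = 0" | (l) "i = N" "i > 0" | (m) "0 < i" "i < N" using i by linarith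
    thus ?thesis
    proof cases
      case z thus ?thesis unfolding key using i j T eq N1 by (auto simp: bt_def \<kappa>_def gd_def c_def power2_eq_square)
    next
      case l thus ?thesis unfolding key using i j T eq N1 by (auto simp: bt_def \<kappa>_def gd_def c_def power2_eq_square)
    next
      case m thus ?thesis unfolding key using i j T eq N1 by (auto simp: bt_def \<kappa>_def gd_def c_def power2_eq_square field_simps)
    qed
  next
    case lo
    consider (l) "i = N" | (m) "i < N" using i by linarith
    thus ?thesis
    proof cases
      case l thus ?thesis unfolding key using i j T lo N1 by (auto simp: bt_def \<kappa>_def gd_def c_def power2_eq_square algebra_simps)
    next
      case m thus ?thesis unfolding key using i j T lo N1 by (auto simp: bt_def \<kappa>_def gd_def c_def power2_eq_square algebra_simps)
    qed
  next
    case low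
    have T1: "?T $$ (i,j) = \<alpha>^(e+2)" using T[OF i] low by simp
    have T3: "?T $$ (i - Suc 0,j) = \<alpha>^(e+1)" using T[of "i - Suc 0"] i low by simp
    consider (l) "i = N" | (m) "i < N" using i by linarith
    thus ?thesis
    proof cases
      case l
      have "Bmat N \<alpha> \<theta> $$ (i,j) = \<alpha>^(e+2) - \<alpha> * \<alpha>^(e+1)"
        unfolding key T1 T3 using l low by (simp add: gd_def)
      thus ?thesis using low by (simp add: bt_def)
    next
      case m
      have T2: "?T $$ (Suc i,j) = \<alpha>^(e+3)" using T[of "Suc i"] m low by (simp add: add.commute)
      have "Bmat N \<alpha> \<theta> $$ (i,j) = (1+\<alpha>^2) * \<alpha>^(e+2) - \<alpha> * \<alpha>^(e+3) - \<alpha> * \<alpha>^(e+1)"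
        unfolding key T1 T2 T3 using m low by (simp add: gd_def)
      also have "\<dots> = 0" by (simp add: power_add eval_nat_numeral algebra_simps)
      finally show ?thesis using low by (simp add: bt_def)
    qed
  qed
qed


lemma det_tri:
  fixes F :: "nat \<times> nat \<Rightarrow> real"
  assumes z: "\<And>i j. i < k+2 \<Longrightarrow> j < k+2 \<Longrightarrow> (i > Suc j \<or> j > Suc i) \<Longrightarrow> F (i,j) = 0"
  shows "det (mat (k+2) (k+2) F) = F (k+1,k+1) * det (mat (k+1) (k+1) F) - F (k+1,k) * F (k,k+1) * det (mat k k F)"
proof -
  let ?A = "mat (k+2) (k+2) F"
  have A: "?A \<in> carrier_mat (k+2) (k+2)" by simp
  let ?g = "\<lambda>j. ?A $$ (k+1,j) * cofactor ?A (k+1) j"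
  have "det ?A = (\<Sum>j<k+2. ?g j)" by (rule laplace_expansion_row[OF A]) simp
  also have "\<dots> = ?g (k+1) + (if k+1+1 < k+2 then ?g (k+1+1) else 0) + (if k+1 > 0 then ?g (k+1-1) else 0)"
    by (rule sum_tri) (auto simp: z)
  also have "\<dots> = ?g (k+1) + ?g k" by simp
  finally have d1: "det ?A = ?g (k+1) + ?g k" .
  have m1: "mat_delete ?A (k+1) (k+1) = mat (k+1) (k+1) F"
    by (rule eq_matI) (auto simp: mat_delete_def)
  have c1: "cofactor ?A (k+1) (k+1) = det (mat (k+1) (k+1) F)"
    unfolding cofactor_def m1 by simp
  define D where "D = mat_delete ?A (k+1) k"
  have D: "D \<in> carrier_mat (k+1) (k+1)" unfolding D_def mat_delete_def by simp
  have Dent: "\<And>i j. i < k+1 \<Longrightarrow> j < k+1 \<Longrightarrow> D $$ (i,j) = F (i, if j < k then j else Suc j)"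
    unfolding D_def mat_delete_def by auto
  let ?h = "\<lambda>i. D $$ (i,k) * cofactor D i k"
  have "det D = (\<Sum>i<k+1. ?h i)" by (rule laplace_expansion_column[OF D]) simp
  also have "\<dots> = ?h k + (if k+1 < k+1 then ?h (k+1) else 0) + (if k > 0 then ?h (k-1) else 0)"
    by (rule sum_tri) (auto simp: Dent z)
  also have "\<dots> = ?h k"
  proof -
    have "k > 0 \<Longrightarrow> D $$ (k-1,k) = 0" using Dent[of "k-1" k] z[of "k-1" "Suc k"] by simp
    thus ?thesis by auto
  qed
  finally have dD: "det D = F (k, k+1) * cofactor D k k" using Dent[of k k] by simp
  have m2: "mat_delete D k k = mat k k F"
    by (rule eq_matI) (auto simp: mat_delete_def D_def)
  have c2: "cofactor D k k = det (mat k k F)"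
    unfolding cofactor_def m2 by simp
  have c3: "cofactor ?A (k+1) k = - det D"
    unfolding cofactor_def D_def by simp
  show ?thesis unfolding d1 c1 c3 dD c2 by simp
qed


lemma det_mat0: "det (mat 0 0 (F :: nat \<times> nat \<Rightarrow> real)) = 1"
  by (simp add: det_def')

lemma det_mat1: "det (mat 1 1 (F :: nat \<times> nat \<Rightarrow> real)) = F (0,0)"
proof -
  have A: "mat 1 1 F \<in> carrier_mat 1 1" by simp
  have "det (mat 1 1 F) = (\<Sum>j<1. mat 1 1 F $$ (0,j) * cofactor (mat 1 1 F) 0 j)"
    by (rule laplace_expansion_row[OF A]) simp
  also have "\<dots> = F (0,0) * det (mat_delete (mat 1 1 F) 0 0)" by (simp add: cofactor_def)
  also have "mat_delete (mat 1 1 F) 0 0 = mat 0 0 F" by (rule eq_matI) (auto simp: mat_delete_def)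
  finally show ?thesis by (simp add: det_mat0)
qed

locale ctx =
  fixes N :: nat and \<alpha> \<theta> :: real
  assumes a0: "0 < \<alpha>" and a1: "\<alpha> < 1" and th: "\<theta> \<ge> 0" and N2: "N \<ge> 2"
begin

abbreviation "\<kappa> \<equiv> 2*\<theta>+1/2"
abbreviation "dl \<equiv> delta N \<alpha> \<theta>"
abbreviation "ph \<equiv> phi N \<alpha> \<kappa>"
abbreviation "bb \<equiv> bt N \<alpha> \<kappa>"
abbreviation "pp \<equiv> \<alpha>^2*\<kappa>*(\<kappa>-1)"

lemma N1: "N \<ge> 1" using N2 by simp

lemma c_nz: "1 - \<alpha>^2 \<noteq> 0"
proof -
  have "\<alpha>^2 < 1" using a0 a1 by (simp add: power_less_one_iff)
  thus ?thesis by simp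
qed

lemma Bmat_entry': "i < N+1 \<Longrightarrow> j < N+1 \<Longrightarrow> Bmat N \<alpha> \<theta> $$ (i,j) = bb i j"
  by (rule Bmat_entry[OF a0 a1 N1])

lemma dl0: "dl 0 = 1" unfolding delta_def by (rule det_mat0)

lemma dl1: "dl 1 = bb 0 0"
  unfolding delta_def det_mat1 using Bmat_entry'[of 0 0] by simp

lemma dl_rec: assumes k: "k+2 \<le> N+1"
  shows "dl (k+2) = bb (k+1) (k+1) * dl (k+1) - pp * dl k"
proof -
  let ?F = "\<lambda>(i,j). Bmat N \<alpha> \<theta> $$ (i,j)"
  have "dl (k+2) = ?F (k+1,k+1) * det (mat (k+1) (k+1) ?F) - ?F (k+1,k) * ?F (k,k+1) * det (mat k k ?F)"
    unfolding delta_def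
  proof (rule det_tri)
    fix i j assume "i < k+2" "j < k+2" "Suc j < i \<or> Suc i < j"
    thus "?F (i,j) = 0" using k by (auto simp: Bmat_entry' bt_def)
  qed
  also have "\<dots> = bb (k+1) (k+1) * dl (k+1) - pp * dl k"
    using k by (simp add: Bmat_entry' bt_def delta_def power2_eq_square)
  finally show ?thesis .
qed

lemma ph_N2: "ph (N+2) = 1" unfolding phi_def by simp
lemma ph_N1: "ph (N+1) = bb N N" unfolding phi_def bt_def using N1 by simp
lemma ph_rec: assumes "2 \<le> k" "k \<le> N"
  shows "ph k = bb (k-1) (k-1) * ph (k+1) - pp * ph (k+2)"
proof -
  obtain m where m: "N + 2 - k = Suc (Suc m)" "N + 2 - (k+1) = Suc m" "N + 2 - (k+2) = m"
    by (rule that[of "N - k"]) (use assms in auto)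
  have "k - 1 \<noteq> N" "k - 1 \<noteq> 0" "k - Suc 0 \<noteq> N" "k - Suc 0 \<noteq> 0" using assms by auto
  thus ?thesis unfolding phi_def m using assms by (simp add: bt_def)
qed

end


definition Cm :: "nat \<Rightarrow> real \<Rightarrow> real \<Rightarrow> real mat" where
  "Cm N \<alpha> \<theta> = mat (N+1) (N+1) (\<lambda>(i,j). if i \<le> j
     then (\<alpha>*(2*\<theta>+1/2))^(j-i) * delta N \<alpha> \<theta> i * phi N \<alpha> (2*\<theta>+1/2) (j+2)
     else (\<alpha>*(2*\<theta>+1/2-1))^(i-j) * delta N \<alpha> \<theta> j * phi N \<alpha> (2*\<theta>+1/2) (i+2))"

context ctx begin

abbreviation "UU \<equiv> \<alpha>*\<kappa>"
abbreviation "LL \<equiv> \<alpha>*(\<kappa>-1)"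

lemma pp_eq: "pp = UU * LL" by (simp add: power2_eq_square algebra_simps)

lemma Cm_carrier: "Cm N \<alpha> \<theta> \<in> carrier_mat (N+1) (N+1)" unfolding Cm_def by simp

lemma Cm_le: "i \<le> j \<Longrightarrow> j < N+1 \<Longrightarrow> Cm N \<alpha> \<theta> $$ (i,j) = UU^(j-i) * dl i * ph (j+2)"
  unfolding Cm_def by simp
lemma Cm_gt: "j < i \<Longrightarrow> i < N+1 \<Longrightarrow> Cm N \<alpha> \<theta> $$ (i,j) = LL^(i-j) * dl j * ph (i+2)"
  unfolding Cm_def by simp

lemma E_const: assumes "i \<le> N - 1"
  shows "dl (i+1) * ph (i+2) - pp * dl i * ph (i+3) = dl (N+1)"
proof -
  have "\<forall>i. i + m = N - 1 \<longrightarrow> dl (i+1) * ph (i+2) - pp * dl i * ph (i+3) = dl (N+1)" for m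
  proof (induction m)
    case 0
    show ?case
    proof (intro allI impI)
      fix i assume "i + 0 = N - 1"
      hence i: "i = N - 1" by simp
      have e1: "i + 1 = N" "i + 2 = N + 1" "i + 3 = N + 2" using i N2 by auto
      have "dl (i+2) = bb (i+1) (i+1) * dl (i+1) - pp * dl i" by (rule dl_rec) (use i N2 in auto)
      thus "dl (i+1) * ph (i+2) - pp * dl i * ph (i+3) = dl (N+1)"
        unfolding e1 using ph_N1 ph_N2 by (simp add: algebra_simps)
    qed
  next
    case (Suc m)
    show ?case
    proof (intro allI impI)
      fix i assume im: "i + Suc m = N - 1"
      have IH: "dl (i+2) * ph (i+3) - pp * dl (i+1) * ph (i+4) = dl (N+1)"
        using Suc.IH[rule_format, of "i+1"] im by (simp add: numeral_eq_Suc)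
      have r1: "dl (i+2) = bb (i+1) (i+1) * dl (i+1) - pp * dl i" by (rule dl_rec) (use im N2 in auto)
      have r2: "ph (i+2) = bb (i+1) (i+1) * ph (i+3) - pp * ph (i+4)"
        using ph_rec[of "i+2"] im N2 by (simp add: numeral_eq_Suc)
      show "dl (i+1) * ph (i+2) - pp * dl i * ph (i+3) = dl (N+1)"
        using IH unfolding r1 r2 by (simp add: algebra_simps)
    qed
  qed
  thus ?thesis using assms by (metis le_add_diff_inverse add.commute)
qed

end


context ctx begin

lemma Bmat_carrier: "Bmat N \<alpha> \<theta> \<in> carrier_mat (N+1) (N+1)"
  unfolding Bmat_def minv_Gamma[OF a0 a1 N1] using Gi_carrier[of N \<alpha>] GammaT_carrier[of N \<alpha>] by auto

lemma bb_up: "bb i (Suc i) = -UU" by (simp add: bt_def)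
lemma bb_dn: "0 < i \<Longrightarrow> bb i (i - Suc 0) = -LL" by (auto simp add: bt_def)

lemma BC_entry:
  assumes i: "i < N+1" and j: "j < N+1"
  shows "(Bmat N \<alpha> \<theta> * Cm N \<alpha> \<theta>) $$ (i,j) = (if i = j then dl (N+1) else 0)"
proof -
  let ?C = "Cm N \<alpha> \<theta>"
  define u where "u = UU"
  define l where "l = LL"
  have pu: "pp = u * l" unfolding u_def l_def by (rule pp_eq)
  let ?g = "\<lambda>k. Bmat N \<alpha> \<theta> $$ (i,k) * ?C $$ (k,j)"
  have "(Bmat N \<alpha> \<theta> * ?C) $$ (i,j) = (\<Sum>k<N+1. ?g k)"
    by (rule mat_mult_entry[OF Bmat_carrier Cm_carrier i j])
  also have "\<dots> = ?g i + (if i+1<N+1 then ?g (i+1) else 0) + (if i>0 then ?g (i-1) else 0)"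
    by (rule sum_tri[OF i]) (use i in \<open>auto simp: Bmat_entry' bt_def\<close>)
  also have "\<dots> = bb i i * ?C $$ (i,j) - (if i < N then u * ?C $$ (Suc i,j) else 0)
       - (if i > 0 then l * ?C $$ (i - 1,j) else 0)"
    using i by (simp add: Bmat_entry' bb_up bb_dn u_def l_def)
  also have "\<dots> = (if i = j then dl (N+1) else 0)"
  proof -
    consider (lt) e where "j = i + e + 1" | (eq) "i = j" | (gt) e where "i = j + e + 1"
      by (metis add.commute less_imp_Suc_add linorder_neqE_nat plus_1_eq_Suc)
    thus ?thesis
    proof cases
      case lt
      define P where "P = ph (j+2)"
      have iN: "i < N" using lt j by simp
      have C1: "?C $$ (i,j) = u^(e+1) * dl i * P" using lt j Cm_le[of i j, unfolded u_def[symmetric] l_def[symmetric]] by (simp add: P_def )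
      have C2: "?C $$ (Suc i,j) = u^e * dl (Suc i) * P" using lt j Cm_le[of "Suc i" j, unfolded u_def[symmetric] l_def[symmetric]] by (simp add: P_def)
      show ?thesis
      proof (cases "i = 0")
        case True
        have "dl (Suc 0) = bb 0 0" using dl1 by simp
        thus ?thesis using True lt iN C1 C2 dl0 by (simp add: algebra_simps)
      next
        case False
        have C3: "?C $$ (i - 1,j) = u^(e+2) * dl (i-1) * P"
        proof -
          have "j - (i - 1) = e + 2" using lt False by simp
          thus ?thesis using lt j Cm_le[of "i-1" j, unfolded u_def[symmetric] l_def[symmetric]] by (simp add: P_def u_def)
        qed
        have r: "dl (i+1) = bb i i * dl i - pp * dl (i-1)"
          using dl_rec[of "i-1"] False iN by simp
        have "bb i i * ?C $$ (i,j) - u * ?C $$ (Suc i,j) - l * ?C $$ (i - 1,j)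
            = u^(e+1) * P * (bb i i * dl i - dl (i+1) - l * u * dl (i-1))"
          unfolding C1 C2 C3 by (simp add: algebra_simps power_add power2_eq_square)
        also have "\<dots> = 0" unfolding r pu by (simp add: algebra_simps)
        finally show ?thesis using False iN lt by simp
      qed
    next
      case eq
      show ?thesis
      proof (cases "i < N")
        case iN: True
        have C1: "?C $$ (i,i) = dl i * ph (i+2)" using Cm_le[of i i, unfolded u_def[symmetric] l_def[symmetric]] i by simp
        have C2: "?C $$ (Suc i,i) = l * dl i * ph (i+3)" using Cm_gt[of i "Suc i", unfolded u_def[symmetric] l_def[symmetric]] iN by (simp add: numeral_eq_Suc)
        have E: "dl (i+1) * ph (i+2) - pp * dl i * ph (i+3) = dl (N+1)" by (rule E_const) (use iN in auto)
        show ?thesis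
        proof (cases "i = 0")
          case True
          have r0: "dl (i+1) = bb i i * dl i" using True dl0 dl1 by simp
          have "bb i i * ?C $$ (i,i) - u * ?C $$ (Suc i,i) = dl (i+1) * ph (i+2) - pp * dl i * ph (i+3)"
            unfolding C1 C2 r0 pu by (simp add: algebra_simps)
          thus ?thesis using E True iN eq by simp
        next
          case False
          have C3: "?C $$ (i-1,i) = u * dl (i-1) * ph (i+2)" using Cm_le[of "i-1" i, unfolded u_def[symmetric] l_def[symmetric]] i False by simp
          have r: "dl (i+1) = bb i i * dl i - pp * dl (i-1)"
            using dl_rec[of "i-1"] False iN by simp
          have "bb i i * ?C $$ (i,i) - u * ?C $$ (Suc i,i) - l * ?C $$ (i - 1,i) = dl (i+1) * ph (i+2) - pp * dl i * ph (i+3)"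
            unfolding C1 C2 C3 r pu by (simp add: algebra_simps)
          thus ?thesis using E False iN eq by simp
        qed
      next
        case False
        hence iN: "i = N" using i by simp
        have C1: "?C $$ (i,i) = dl i * ph (i+2)" using Cm_le[of i i, unfolded u_def[symmetric] l_def[symmetric]] i by simp
        have C3: "?C $$ (i-1,i) = u * dl (i-1) * ph (i+2)" using Cm_le[of "i-1" i, unfolded u_def[symmetric] l_def[symmetric]] i iN N2 by simp
        have r: "dl (i+1) = bb i i * dl i - pp * dl (i-1)"
          using dl_rec[of "i-1"] iN N2 by simp
        have "bb i i * ?C $$ (i,i) - l * ?C $$ (i - 1,i) = dl (i+1)"
          unfolding C1 C3 r pu using iN ph_N2 by (simp add: algebra_simps)
        thus ?thesis using iN eq N2 by simp
      qed
    next
      case gt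
      define D where "D = dl j"
      have i0: "i > 0" using gt by simp
      have C1: "?C $$ (i,j) = l^(e+1) * D * ph (i+2)" using gt i Cm_gt[of j i, unfolded u_def[symmetric] l_def[symmetric]] by (simp add: D_def)
      have C3: "?C $$ (i-1,j) = l^e * D * ph (i+1)"
      proof (cases e)
        case 0 thus ?thesis using gt i Cm_le[of "i-1" j, unfolded u_def[symmetric] l_def[symmetric]] by (simp add: D_def)
      next
        case (Suc e')
        thus ?thesis using gt i Cm_gt[of j "i-1", unfolded u_def[symmetric] l_def[symmetric]] by (simp add: D_def)
      qed
      show ?thesis
      proof (cases "i < N")
        case True
        have C2: "?C $$ (Suc i,j) = l^(e+2) * D * ph (i+3)" using gt True Cm_gt[of j "Suc i", unfolded u_def[symmetric] l_def[symmetric]]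
          by (simp add: D_def numeral_eq_Suc)
        have r: "ph (i+1) = bb i i * ph (i+2) - pp * ph (i+3)"
          using ph_rec[of "i+1"] True i0 by (simp add: numeral_eq_Suc)
        have "bb i i * ?C $$ (i,j) - u * ?C $$ (Suc i,j) - l * ?C $$ (i - 1,j) = 0"
          unfolding C1 C2 C3 r pu by (simp add: algebra_simps power_add power2_eq_square)
        thus ?thesis using True i0 gt by simp
      next
        case False
        hence iN: "i = N" using i by simp
        have "bb i i * ?C $$ (i,j) - l * ?C $$ (i - 1,j) = 0"
          unfolding C1 C3 using iN ph_N1 ph_N2 by (simp add: algebra_simps)
        thus ?thesis using iN i0 gt by simp
      qed
    qed
  qed
  finally show ?thesis .
qed

lemma BC: "Bmat N \<alpha> \<theta> * Cm N \<alpha> \<theta> = dl (N+1) \<cdot>\<^sub>m 1\<^sub>m (N+1)"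
  by (rule eq_matI) (use Bmat_carrier Cm_carrier in \<open>auto simp del: index_mult_mat simp: BC_entry index_mult_mat(2,3)\<close>)

end


lemma step_ge:
  fixes p s b x y :: real
  assumes p: "p \<ge> 0" and s: "s > 0" and y: "y > 0" and xy: "x \<ge> s*y" and g: "s*b - p - s*s \<ge> 0"
  shows "x > 0" "b*x - p*y \<ge> s*x"
proof -
  have "s*y > 0" using s y by simp
  thus x: "x > 0" using xy by linarith
  have h1: "p*(s*y) \<le> p*x" by (rule mult_left_mono[OF xy p])
  have h2: "x*(s*b - p - s*s) \<ge> 0" using x g by simp
  have e: "s*(b*x - p*y - s*x) = x*(s*b - p - s*s) + (p*x - p*(s*y))" by (simp add: algebra_simps)
  have "s*(b*x - p*y - s*x) \<ge> 0" unfolding e using h1 h2 by linarith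
  hence "b*x - p*y - s*x \<ge> 0" using s by (simp add: zero_le_mult_iff)
  thus "b*x - p*y \<ge> s*x" by simp
qed

lemma step_lt:
  fixes p s b x y :: real
  assumes p: "p < 0" and s: "s > 0" and b: "b > 0" and y: "y > 0" and lo: "(b*s - p)*y \<le> s*x" and up: "x \<le> s*y"
    and g: "s*s - b*s + p \<ge> 0"
  shows "x > 0" "(b*s - p)*x \<le> s*(b*x - p*y)" "b*x - p*y \<le> s*x"
proof -
  have "b*s > 0" using b s by simp
  hence bs: "b*s - p > 0" using p by linarith
  have "(b*s - p)*y > 0" using bs y by simp
  hence "s*x > 0" using lo by linarith
  thus x: "x > 0" using s by (simp add: zero_less_mult_iff)
  have e1: "s*(b*x - p*y) - (b*s - p)*x = (-p)*(s*y - x)" by (simp add: algebra_simps)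
  have "(-p)*(s*y - x) \<ge> 0" using p up by (intro mult_nonneg_nonneg) auto
  thus "(b*s - p)*x \<le> s*(b*x - p*y)" using e1 by linarith
  define q where "q = -p"
  have q: "q > 0" using p q_def by simp
  have lo': "(b*s + q)*y \<le> s*x" using lo q_def by simp
  have h1: "(s*q)*((b*s + q)*y) \<le> (s*q)*(s*x)" by (rule mult_left_mono[OF lo']) (use s q in simp)
  have h2: "x*s*b*(s*s - b*s - q) \<ge> 0" using x s b g q_def by simp
  have e2: "(b*s + q)*s*(s*x - (b*x - p*y)) = x*s*b*(s*s - b*s - q) + ((s*q)*(s*x) - (s*q)*((b*s + q)*y))"
    unfolding q_def by (simp add: algebra_simps)
  have "(b*s + q)*s*(s*x - (b*x - p*y)) \<ge> 0" unfolding e2 using h1 h2 by linarith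
  moreover have "(b*s + q)*s > 0" using bs s q_def by simp
  ultimately have "s*x - (b*x - p*y) \<ge> 0" by (simp add: zero_le_mult_iff)
  thus "b*x - p*y \<le> s*x" by simp
qed

lemma gen_bm_pos: fixes k x :: real assumes "k \<ge> 1/2" "x < 1" "x > 0" shows "1 + x*(k-2) + k > 0"
proof -
  have e: "1 + x*(k-2) + k = (1-x)*(3/2) + (k-1/2)*(1+x)" by (simp add: field_simps)
  have "(1-x)*(3/2) > 0" using assms by simp
  moreover have "(k-1/2)*(1+x) \<ge> 0" using assms by simp
  ultimately show ?thesis unfolding e by linarith
qed

lemma gen_b1: fixes k x :: real assumes "k \<ge> 1/2" "x < 1" "x > 0"
  shows "(1 - x + k)*(1 - 2*x + k) - x*k*(k-1) > 0"
proof -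
  have e: "(1 - x + k)*(1 - 2*x + k) - x*k*(k-1) = (1-x)*(1 - 2*x + 2*k + k*k)" by (simp add: algebra_simps)
  have "k*k \<ge> (1/2)*(1/2)" by (rule mult_mono) (use assms in auto)
  hence "1 - 2*x + 2*k + k*k > 0" using assms by linarith
  moreover have "1 - x > 0" using assms by simp
  ultimately show ?thesis unfolding e by simp
qed

lemma gen_g: fixes k x :: real shows "(1 - x + k)*(1 - x + k) - (1 + x*(k-2) + k)*(1 - x + k) + x*k*(k-1) = x*(k-1)*(x-1)"
  by (simp add: algebra_simps)

lemma gen_case: fixes k x :: real assumes k: "k \<ge> 1/2" and x: "x > 0" "x < 1"
  shows "(x*k*(k-1) \<ge> 0 \<and> (1 - x + k)*(1 + x*(k-2) + k) - x*k*(k-1) - (1 - x + k)*(1 - x + k) \<ge> 0)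
       \<or> (x*k*(k-1) < 0 \<and> (1 - x + k)*(1 - x + k) - (1 + x*(k-2) + k)*(1 - x + k) + x*k*(k-1) \<ge> 0)"
proof (cases "k \<ge> 1")
  case True
  have "x*k*(k-1) \<ge> 0" using True x by simp
  moreover have "(1 - x + k)*(1 + x*(k-2) + k) - x*k*(k-1) - (1 - x + k)*(1 - x + k) = x*(k-1)*(1-x)"
    by (simp add: algebra_simps)
  moreover have "x*(k-1)*(1-x) \<ge> 0" using True x by simp
  ultimately show ?thesis by simp
next
  case False
  have "x*k > 0" using k x by simp
  hence "x*k*(k-1) < 0" using False by (simp add: mult_pos_neg)
  moreover have "(1 - x + k)*(1 - x + k) - (1 + x*(k-2) + k)*(1 - x + k) + x*k*(k-1) = x*(1-k)*(1-x)"
    by (simp add: algebra_simps)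
  moreover have "x*(1-k)*(1-x) \<ge> 0" using False x by simp
  ultimately show ?thesis by simp
qed

lemma pos_generic:
  fixes f :: "nat \<Rightarrow> real" and p s b b1 :: real and N :: nat
  assumes N2: "N \<ge> 2" and fN2: "f (N+2) = 1" and fN1: "f (N+1) = s"
    and rec: "\<And>k. 2 \<le> k \<Longrightarrow> k \<le> N \<Longrightarrow> f k = b * f (k+1) - p * f (k+2)"
    and s: "s > 0" and b: "b > 0" and kb: "s*b1 - p > 0"
    and cs: "(p \<ge> 0 \<and> s*b - p - s*s \<ge> 0) \<or> (p < 0 \<and> s*s - b*s + p \<ge> 0)"
  shows "b1 * f 2 - p * f 3 > 0"
proof -
  have main: "f 2 > 0 \<and> p * (s * f 3) \<le> p * f 2"
  proof (cases "p \<ge> 0 \<and> s*b - p - s*s \<ge> 0")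
    case True
    hence pp0: "p \<ge> 0" and gg: "s*b - p - s*s \<ge> 0" by auto
    have inv: "\<forall>k. k + m = N + 1 \<longrightarrow> 2 \<le> k \<longrightarrow> f (k+1) > 0 \<and> f k \<ge> s * f (k+1)" for m
    proof (induction m)
      case 0 show ?case using fN1 fN2 by auto
    next
      case (Suc m)
      show ?case
      proof (intro allI impI)
        fix k assume k: "k + Suc m = N + 1" "2 \<le> k"
        have kN: "k \<le> N" using k by simp
        have IH: "f (k+2) > 0" "f (k+1) \<ge> s * f (k+2)"
          using Suc.IH[rule_format, of "k+1"] k by (simp_all add: numeral_eq_Suc)
        note st = step_ge[OF pp0 s IH gg]
        show "f (k+1) > 0 \<and> f k \<ge> s * f (k+1)" using st rec[OF k(2) kN] by simp
      qed
    qed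
    have i2: "f 3 > 0" "f 2 \<ge> s * f 3" using inv[rule_format, of 2 "N - 1"] N2 by (simp_all add: numeral_eq_Suc)
    have "s * f 3 > 0" using i2 s by simp
    hence "f 2 > 0" using i2 by linarith
    moreover have "p * (s * f 3) \<le> p * f 2" by (rule mult_left_mono[OF i2(2) pp0])
    ultimately show ?thesis by simp
  next
    case False
    hence pp0: "p < 0" and gg: "s*s - b*s + p \<ge> 0" using cs by auto
    have inv: "\<forall>k. k + m = N + 1 \<longrightarrow> 2 \<le> k \<longrightarrow> f (k+1) > 0 \<and> (b*s - p) * f (k+1) \<le> s * f k \<and> f k \<le> s * f (k+1)" for m
    proof (induction m)
      case 0 show ?case
      proof (intro allI impI)
        fix k assume k: "k + 0 = N+1" "2 \<le> k"
        hence kk: "k = N+1" by simp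
        have "(b*s - p) * 1 \<le> s * s" using gg by simp
        thus "f (k+1) > 0 \<and> (b*s - p) * f (k+1) \<le> s * f k \<and> f k \<le> s * f (k+1)"
          unfolding kk using fN1 fN2 by (simp add: numeral_eq_Suc)
      qed
    next
      case (Suc m)
      show ?case
      proof (intro allI impI)
        fix k assume k: "k + Suc m = N + 1" "2 \<le> k"
        have kN: "k \<le> N" using k by simp
        have IH: "f (k+2) > 0" "(b*s - p) * f (k+2) \<le> s * f (k+1)" "f (k+1) \<le> s * f (k+2)"
          using Suc.IH[rule_format, of "k+1"] k by (simp_all add: numeral_eq_Suc)
        note st = step_lt[OF pp0 s b IH gg]
        show "f (k+1) > 0 \<and> (b*s - p) * f (k+1) \<le> s * f k \<and> f k \<le> s * f (k+1)"
          using st rec[OF k(2) kN] by simp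
      qed
    qed
    have i2: "f 3 > 0" "(b*s - p) * f 3 \<le> s * f 2" "f 2 \<le> s * f 3"
      using inv[rule_format, of 2 "N - 1"] N2 by (simp_all add: numeral_eq_Suc)
    have "b*s > 0" using b s by simp
    hence "(b*s - p) > 0" using pp0 by linarith
    hence "(b*s - p) * f 3 > 0" using i2(1) by simp
    hence "s * f 2 > 0" using i2(2) by linarith
    hence "f 2 > 0" using s by (simp add: zero_less_mult_iff)
    moreover have "(-p) * f 2 \<le> (-p) * (s * f 3)" by (rule mult_left_mono[OF i2(3)]) (use pp0 in simp)
    ultimately show ?thesis by simp
  qed
  have "s * (b1 * f 2 - p * f 3) = s*b1*f 2 - p*(s*f 3)" by (simp add: algebra_simps)
  also have "\<dots> \<ge> s*b1*f 2 - p*f 2" using main by linarith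
  also have "s*b1*f 2 - p*f 2 = f 2 * (s*b1 - p)" by (simp add: algebra_simps)
  finally have "s * (b1 * f 2 - p * f 3) \<ge> f 2 * (s*b1 - p)" .
  moreover have "f 2 * (s*b1 - p) > 0" using main kb by simp
  ultimately have "s * (b1 * f 2 - p * f 3) > 0" by linarith
  thus ?thesis using s by (simp add: zero_less_mult_iff)
qed

context ctx begin

abbreviation "ss \<equiv> 1 - \<alpha>^2 + \<kappa>"
abbreviation "bm \<equiv> 1 + \<alpha>^2*(\<kappa>-2) + \<kappa>"
abbreviation "b1 \<equiv> 1 - 2*\<alpha>^2 + \<kappa>"

lemma bb_mid: "0 < i \<Longrightarrow> i < N \<Longrightarrow> bb i i = bm" by (simp add: bt_def)
lemma bb_NN: "bb N N = ss" using N1 by (simp add: bt_def)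
lemma bb_00: "bb 0 0 = b1" by (simp add: bt_def)

lemma ph_rec': "2 \<le> k \<Longrightarrow> k \<le> N \<Longrightarrow> ph k = bm * ph (k+1) - pp * ph (k+2)"
  using ph_rec[of k] bb_mid[of "k-1"] by simp

lemma dl_E0: "dl (N+1) = b1 * ph 2 - pp * ph 3"
  using E_const[of 0] dl0 dl1 bb_00 by (simp add: numeral_2_eq_2)

lemma a2: "\<alpha>^2 < 1" "\<alpha>^2 > 0" using a0 a1 by (simp_all add: power_less_one_iff)
lemma kap: "\<kappa> \<ge> 1/2" using th by simp
lemma ss_pos: "ss > 0" using a2 kap by linarith
lemma bm_pos: "bm > 0" using gen_bm_pos[OF kap a2(1) a2(2)] .

lemma g_ss: "ss*ss - bm*ss + pp = \<alpha>^2*(\<kappa>-1)*(\<alpha>^2-1)"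
  using gen_g[of "\<alpha>^2" \<kappa>] by simp

lemma key_b1: "ss*b1 - pp > 0"
  using gen_b1[OF kap a2(1) a2(2)] by (simp add: algebra_simps)

lemma dl_pos: "dl (N+1) > 0"
proof -
  have ss: "ss > 0" using gen_bm_pos[OF kap a2(1) a2(2)] a2 kap by linarith
  have "b1 * ph 2 - pp * ph 3 > 0"
  proof (rule pos_generic[of N ph ss bm pp b1])
    show "N \<ge> 2" by (rule N2)
    show "ph (N+2) = 1" by (rule ph_N2)
    show "ph (N+1) = ss" using ph_N1 bb_NN by simp
    show "\<And>k. 2 \<le> k \<Longrightarrow> k \<le> N \<Longrightarrow> ph k = bm * ph (k+1) - pp * ph (k+2)" by (rule ph_rec')
    show "ss > 0" by (rule ss)
    show "bm > 0" by (rule bm_pos)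
    show "ss*b1 - pp > 0" by (rule key_b1)
    show "(pp \<ge> 0 \<and> ss*bm - pp - ss*ss \<ge> 0) \<or> (pp < 0 \<and> ss*ss - bm*ss + pp \<ge> 0)"
      using gen_case[OF kap a2(2) a2(1)] .
  qed
  thus ?thesis using dl_E0 by simp
qed
end


lemma smat_vec: assumes "A \<in> carrier_mat nr nc" "v \<in> carrier_vec nc"
  shows "((k::real) \<cdot>\<^sub>m A) *\<^sub>v v = k \<cdot>\<^sub>v (A *\<^sub>v v)"
  by (rule eq_vecI) (use assms in \<open>auto simp: scalar_prod_def sum_distrib_left mult.assoc\<close>)

definition onev :: "nat \<Rightarrow> real vec" where "onev n = vec n (\<lambda>_. 1)"

context ctx begin

abbreviation "MM \<equiv> Gamma N \<alpha> + GammaT N \<alpha> + (2*\<theta>) \<cdot>\<^sub>m 1\<^sub>m (N+1)"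
abbreviation "cc \<equiv> 1 - \<alpha>^2"

lemma MM_carrier: "MM \<in> carrier_mat (N+1) (N+1)"
  using Gamma_carrier[of N \<alpha>] GammaT_carrier[of N \<alpha>] by auto

lemma MM_eq: "MM = Gamma N \<alpha> + Tm N \<alpha> \<theta>"
  unfolding Tm_def using Gamma_carrier[of N \<alpha>] GammaT_carrier[of N \<alpha>]
  by (subst assoc_add_mat) auto

lemma Bmat_eq: "Bmat N \<alpha> \<theta> = cc \<cdot>\<^sub>m (1\<^sub>m (N+1) + Gi N \<alpha> * Tm N \<alpha> \<theta>)"
  unfolding Bmat_def minv_Gamma[OF a0 a1 N1] Tm_def by simp

lemma GB: "Gamma N \<alpha> * Bmat N \<alpha> \<theta> = cc \<cdot>\<^sub>m MM"
proof -
  have G: "Gamma N \<alpha> \<in> carrier_mat (N+1) (N+1)" by (rule Gamma_carrier)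
  have Gi: "Gi N \<alpha> \<in> carrier_mat (N+1) (N+1)" by (rule Gi_carrier)
  have T: "Tm N \<alpha> \<theta> \<in> carrier_mat (N+1) (N+1)" by (rule Tm_carrier)
  have GiT: "Gi N \<alpha> * Tm N \<alpha> \<theta> \<in> carrier_mat (N+1) (N+1)" using Gi T by simp
  have "Gamma N \<alpha> * Bmat N \<alpha> \<theta> = cc \<cdot>\<^sub>m (Gamma N \<alpha> * (1\<^sub>m (N+1) + Gi N \<alpha> * Tm N \<alpha> \<theta>))"
    unfolding Bmat_eq by (rule mult_smult_distrib[OF G, of _ "N+1"]) (use GiT in \<open>auto intro: add_carrier_mat\<close>)
  also have "Gamma N \<alpha> * (1\<^sub>m (N+1) + Gi N \<alpha> * Tm N \<alpha> \<theta>) = Gamma N \<alpha> * 1\<^sub>m (N+1) + Gamma N \<alpha> * (Gi N \<alpha> * Tm N \<alpha> \<theta>)"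
    by (rule mult_add_distrib_mat[OF G]) (use GiT in simp_all)
  also have "Gamma N \<alpha> * (Gi N \<alpha> * Tm N \<alpha> \<theta>) = (Gamma N \<alpha> * Gi N \<alpha>) * Tm N \<alpha> \<theta>"
    by (rule assoc_mult_mat[OF G Gi T, symmetric])
  also have "\<dots> = Tm N \<alpha> \<theta>" unfolding Gamma_Gi[OF a0 a1 N1] using T by simp
  also have "Gamma N \<alpha> * 1\<^sub>m (N+1) = Gamma N \<alpha>" using G by simp
  finally show ?thesis unfolding MM_eq .
qed

lemma det_Bmat: "det (Bmat N \<alpha> \<theta>) = dl (N+1)"
proof -
  have "mat (N+1) (N+1) (\<lambda>(i,j). Bmat N \<alpha> \<theta> $$ (i,j)) = Bmat N \<alpha> \<theta>"
    by (rule eq_matI) (use Bmat_carrier in auto)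
  thus ?thesis unfolding delta_def by simp
qed

lemma det_MM: "det MM \<noteq> 0"
proof -
  have G: "Gamma N \<alpha> \<in> carrier_mat (N+1) (N+1)" by (rule Gamma_carrier)
  have "det (Gamma N \<alpha>) * det (Gi N \<alpha>) = 1"
    using det_mult[OF G Gi_carrier, of \<alpha>] Gamma_Gi[OF a0 a1 N1] by simp
  hence dG: "det (Gamma N \<alpha>) \<noteq> 0" by auto
  have "det (Gamma N \<alpha> * Bmat N \<alpha> \<theta>) = det (Gamma N \<alpha>) * dl (N+1)"
    using det_mult[OF G Bmat_carrier] det_Bmat by simp
  moreover have "det (Gamma N \<alpha> * Bmat N \<alpha> \<theta>) = cc ^ (N+1) * det MM"
    unfolding GB using MM_carrier by simp
  ultimately have "cc ^ (N+1) * det MM = det (Gamma N \<alpha>) * dl (N+1)" by simp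
  moreover have "det (Gamma N \<alpha>) * dl (N+1) \<noteq> 0" using dG dl_pos by simp
  ultimately show ?thesis by auto
qed

definition "wv = cc \<cdot>\<^sub>v (Gi N \<alpha> *\<^sub>v onev (N+1))"
definition "xv = (1 / dl (N+1)) \<cdot>\<^sub>v (Cm N \<alpha> \<theta> *\<^sub>v wv)"

lemma onev_carrier: "onev n \<in> carrier_vec n" by (simp add: onev_def)
lemma gv_carrier: "Gi N \<alpha> *\<^sub>v onev (N+1) \<in> carrier_vec (N+1)"
  by (rule mult_mat_vec_carrier[OF Gi_carrier onev_carrier])
lemma wv_carrier: "wv \<in> carrier_vec (N+1)" unfolding wv_def using gv_carrier by simp
lemma xv_carrier: "xv \<in> carrier_vec (N+1)" unfolding xv_def
  using mult_mat_vec_carrier[OF Cm_carrier wv_carrier] by simp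

lemma B_xv: "Bmat N \<alpha> \<theta> *\<^sub>v xv = wv"
proof -
  have B: "Bmat N \<alpha> \<theta> \<in> carrier_mat (N+1) (N+1)" by (rule Bmat_carrier)
  have C: "Cm N \<alpha> \<theta> \<in> carrier_mat (N+1) (N+1)" by (rule Cm_carrier)
  have "Bmat N \<alpha> \<theta> *\<^sub>v xv = (1 / dl (N+1)) \<cdot>\<^sub>v (Bmat N \<alpha> \<theta> *\<^sub>v (Cm N \<alpha> \<theta> *\<^sub>v wv))"
    unfolding xv_def by (rule mult_mat_vec[OF B mult_mat_vec_carrier[OF C wv_carrier]])
  also have "Bmat N \<alpha> \<theta> *\<^sub>v (Cm N \<alpha> \<theta> *\<^sub>v wv) = (Bmat N \<alpha> \<theta> * Cm N \<alpha> \<theta>) *\<^sub>v wv"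
    by (rule assoc_mult_mat_vec[OF B C wv_carrier, symmetric])
  also have "\<dots> = dl (N+1) \<cdot>\<^sub>v wv" unfolding BC
    by (subst smat_vec[of _ "N+1" "N+1"]) (use wv_carrier in auto)
  also have "(1 / dl (N+1)) \<cdot>\<^sub>v (dl (N+1) \<cdot>\<^sub>v wv) = wv" using dl_pos by (simp add: smult_smult_assoc)
  finally show ?thesis .
qed

lemma MM_xv: "MM *\<^sub>v xv = onev (N+1)"
proof -
  have G: "Gamma N \<alpha> \<in> carrier_mat (N+1) (N+1)" by (rule Gamma_carrier)
  have "cc \<cdot>\<^sub>v (MM *\<^sub>v xv) = (cc \<cdot>\<^sub>m MM) *\<^sub>v xv"
    by (rule smat_vec[symmetric, OF MM_carrier xv_carrier])
  also have "\<dots> = (Gamma N \<alpha> * Bmat N \<alpha> \<theta>) *\<^sub>v xv" unfolding GB ..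
  also have "\<dots> = Gamma N \<alpha> *\<^sub>v wv" using assoc_mult_mat_vec[OF G Bmat_carrier xv_carrier] B_xv by simp
  also have "\<dots> = cc \<cdot>\<^sub>v (Gamma N \<alpha> *\<^sub>v (Gi N \<alpha> *\<^sub>v onev (N+1)))"
    unfolding wv_def by (rule mult_mat_vec[OF G gv_carrier])
  also have "Gamma N \<alpha> *\<^sub>v (Gi N \<alpha> *\<^sub>v onev (N+1)) = (Gamma N \<alpha> * Gi N \<alpha>) *\<^sub>v onev (N+1)"
    by (rule assoc_mult_mat_vec[OF G Gi_carrier onev_carrier, symmetric])
  also have "(Gamma N \<alpha> * Gi N \<alpha>) *\<^sub>v onev (N+1) = onev (N+1)" unfolding Gamma_Gi[OF a0 a1 N1] by (simp add: onev_def)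
  finally have e: "cc \<cdot>\<^sub>v (MM *\<^sub>v xv) = cc \<cdot>\<^sub>v onev (N+1)" .
  show ?thesis
  proof (rule eq_vecI)
    fix i assume "i < dim_vec (onev (N+1))"
    hence i: "i < N+1" by (simp add: onev_def)
    have "cc * (MM *\<^sub>v xv) $ i = cc * onev (N+1) $ i"
      using arg_cong[OF e, of "\<lambda>v. v $ i"] i MM_carrier by (simp add: onev_def)
    thus "(MM *\<^sub>v xv) $ i = onev (N+1) $ i" using c_nz by simp
  qed (use MM_carrier in \<open>simp add: onev_def\<close>)
qed

lemma nu_vec_eq: "nu_vec N \<alpha> \<theta> = xv"
  unfolding nu_vec_def using minv_solve[OF MM_carrier det_MM xv_carrier MM_xv] by (simp add: onev_def)

end


lemma split_sum_ends:
  fixes F :: "nat \<Rightarrow> real"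
  assumes "N \<ge> 2"
  shows "(\<Sum>j<N+1. F j) = F 0 + (\<Sum>J=2..N. F (J-1)) + F N"
  using assms
proof (induction N rule: nat_induct_at_least)
  case base
  show ?case by (simp add: numeral_3_eq_3 numeral_2_eq_2)
next
  case (Suc n)
  have "(\<Sum>j<Suc n+1. F j) = (\<Sum>j<n+1. F j) + F (n+1)" by simp
  also have "\<dots> = F 0 + (\<Sum>J=2..n. F (J-1)) + F n + F (n+1)" using Suc.IH by simp
  also have "(\<Sum>J=2..Suc n. F (J-1)) = (\<Sum>J=2..n. F (J-1)) + F n"
    using Suc.hyps by (simp add: sum.cl_ivl_Suc)
  ultimately show ?case by simp
qed

lemma split_sum_mid:
  fixes F :: "nat \<Rightarrow> real"
  assumes "1 \<le> a" "a \<le> c" "c \<le> b + 1"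
  shows "(\<Sum>J=a..b. F J) = (\<Sum>J=a..c-1. F J) + (\<Sum>J=c..b. F J)"
proof -
  have "{a..b} = {a..c-1} \<union> {c..b}" using assms by auto
  moreover have "{a..c-1} \<inter> {c..b} = {}" using assms by auto
  ultimately show ?thesis by (simp add: sum.union_disjoint)
qed

context ctx begin

lemma wv_entry: assumes j: "j < N+1"
  shows "wv $ j = (if j = 0 \<or> j = N then 1 - \<alpha> else (1-\<alpha>)^2)"
proof -
  let ?g = "\<lambda>k. Gi N \<alpha> $$ (j,k) * onev (N+1) $ k"
  have "(Gi N \<alpha> *\<^sub>v onev (N+1)) $ j = (\<Sum>k<N+1. ?g k)"
    by (rule mat_vec_entry[OF Gi_carrier onev_carrier j])
  also have "\<dots> = ?g j + (if j+1<N+1 then ?g (j+1) else 0) + (if j>0 then ?g (j-1) else 0)"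
    by (rule sum_tri[OF j]) (use j in \<open>auto simp: Gi_entry\<close>)
  finally have e: "(Gi N \<alpha> *\<^sub>v onev (N+1)) $ j = ?g j + (if j+1<N+1 then ?g (j+1) else 0) + (if j>0 then ?g (j-1) else 0)" .
  have c: "cc \<noteq> 0" by (rule c_nz)
  have w: "wv $ j = cc * (Gi N \<alpha> *\<^sub>v onev (N+1)) $ j" unfolding wv_def using j gv_carrier[unfolded carrier_vec_def] by simp
  have o: "\<And>k. k < N+1 \<Longrightarrow> onev (N+1) $ k = 1" by (simp add: onev_def)
  consider (z) "j = 0" | (l) "j = N" "j > 0" | (m) "0 < j" "j < N" using j by linarith
  thus ?thesis
  proof cases
    case z
    have "wv $ j = cc * (1/cc - \<alpha>/cc)" unfolding w e using z N1 o[of 0] o[of 1] Gi_diag[of 0 N \<alpha>] Gi_up[of 0 N \<alpha>]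
      by simp
    also have "\<dots> = 1 - \<alpha>" using c by (simp add: field_simps)
    finally show ?thesis using z by simp
  next
    case l
    have "wv $ j = cc * (1/cc - \<alpha>/cc)" unfolding w e using l N1 o[of N] o[of "N-1"] Gi_diag[of N N \<alpha>] Gi_dn[of N N \<alpha>]
      by simp
    also have "\<dots> = 1 - \<alpha>" using c by (simp add: field_simps)
    finally show ?thesis using l by simp
  next
    case m
    have "wv $ j = cc * ((1+\<alpha>^2)/cc - \<alpha>/cc - \<alpha>/cc)" unfolding w e using m o[of j] o[of "j+1"] o[of "j-1"]
      Gi_diag[of j N \<alpha>] Gi_up[of j N \<alpha>] Gi_dn[of j N \<alpha>] by simp
    also have "\<dots> = cc * ((1+\<alpha>^2 - \<alpha> - \<alpha>)/cc)" by (simp add: diff_divide_distrib)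
    also have "\<dots> = 1+\<alpha>^2 - \<alpha> - \<alpha>" using c by simp
    also have "\<dots> = (1 - \<alpha>)^2" by (simp add: algebra_simps power2_eq_square)
    finally show ?thesis using m by simp
  qed
qed

lemma xv_entry: "i < N+1 \<Longrightarrow> xv $ i = (1 / dl (N+1)) * (\<Sum>j<N+1. Cm N \<alpha> \<theta> $$ (i,j) * wv $ j)"
  unfolding xv_def using mat_vec_entry[OF Cm_carrier wv_carrier, of i] Cm_carrier by simp

end


lemma alg3: fixes a d X S Y :: real shows "(1/d)*((1-a)*X + (1-a)^2*S + (1-a)*Y) = (1-a)/d * (X + (1-a)*S + Y)"
  by (simp add: divide_inverse algebra_simps power2_eq_square)
lemma alg4: fixes a d X S T Y :: real shows "(1/d)*((1-a)*X + (1-a)^2*S + (1-a)^2*T + (1-a)*Y) = (1-a)/d * (X + (1-a)*S + (1-a)*T + Y)"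
  by (simp add: divide_inverse algebra_simps power2_eq_square)

context ctx begin

abbreviation "FF i j \<equiv> Cm N \<alpha> \<theta> $$ (i,j) * wv $ j"

lemma xv_split: "i < N+1 \<Longrightarrow> xv $ i = (1 / dl (N+1)) * (FF i 0 + (\<Sum>J=2..N. FF i (J-1)) + FF i N)"
  using xv_entry[of i] split_sum_ends[OF N2, of "\<lambda>j. FF i j"] by simp

lemma nu_1: "nu N \<alpha> \<theta> 1 = (1 - \<alpha>) / dl (N+1) *
        (ph 2 + (1 - \<alpha>) * (\<Sum>j=2..N. UU ^ (j - 1) * ph (j+1)) + UU ^ N)"
proof -
  have f0: "FF 0 0 = (1-\<alpha>) * ph 2" using Cm_le[of 0 0] wv_entry[of 0] dl0 by (simp add: numeral_2_eq_2)
  have fN: "FF 0 N = (1-\<alpha>) * UU^N" using Cm_le[of 0 N] wv_entry[of N] dl0 ph_N2 by simp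
  have fm: "(\<Sum>J=2..N. FF 0 (J-1)) = (1-\<alpha>)^2 * (\<Sum>j=2..N. UU ^ (j - 1) * ph (j+1))"
    unfolding sum_distrib_left
  proof (rule sum.cong[OF refl])
    fix J assume J: "J \<in> {2..N}"
    have "J - 1 + 2 = J + 1" using J by auto
    thus "FF 0 (J-1) = (1-\<alpha>)^2 * (UU ^ (J - 1) * ph (J+1))"
      using J Cm_le[of 0 "J-1"] wv_entry[of "J-1"] dl0 by auto
  qed
  have "nu N \<alpha> \<theta> 1 = xv $ 0" unfolding nu_def nu_vec_eq by simp
  also have "\<dots> = (1 / dl (N+1)) * ((1-\<alpha>) * ph 2 + (1-\<alpha>)^2 * (\<Sum>j=2..N. UU ^ (j - 1) * ph (j+1)) + (1-\<alpha>) * UU^N)"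
    using xv_split[of 0] f0 fN fm by simp
  also have "\<dots> = (1 - \<alpha>) / dl (N+1) * (ph 2 + (1 - \<alpha>) * (\<Sum>j=2..N. UU ^ (j - 1) * ph (j+1)) + UU ^ N)"
    by (rule alg3)
  finally show ?thesis .
qed

lemma nu_N1: "nu N \<alpha> \<theta> (N+1) = (1 - \<alpha>) / dl (N+1) *
        (LL ^ N + (1 - \<alpha>) * (\<Sum>j=2..N. LL ^ (N + 1 - j) * dl (j - 1)) + dl N)"
proof -
  have f0: "FF N 0 = (1-\<alpha>) * LL^N" using Cm_gt[of 0 N] wv_entry[of 0] dl0 ph_N2 N2 by simp
  have fN: "FF N N = (1-\<alpha>) * dl N" using Cm_le[of N N] wv_entry[of N] ph_N2 by simp
  have fm: "(\<Sum>J=2..N. FF N (J-1)) = (1-\<alpha>)^2 * (\<Sum>j=2..N. LL ^ (N + 1 - j) * dl (j - 1))"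
    unfolding sum_distrib_left
  proof (rule sum.cong[OF refl])
    fix J assume J: "J \<in> {2..N}"
    have "N - (J - 1) = N + 1 - J" using J by auto
    thus "FF N (J-1) = (1-\<alpha>)^2 * (LL ^ (N + 1 - J) * dl (J - 1))"
      using J Cm_gt[of "J-1" N] wv_entry[of "J-1"] ph_N2 by auto
  qed
  have "nu N \<alpha> \<theta> (N+1) = xv $ N" unfolding nu_def nu_vec_eq by simp
  also have "\<dots> = (1 / dl (N+1)) * ((1-\<alpha>) * LL^N + (1-\<alpha>)^2 * (\<Sum>j=2..N. LL ^ (N + 1 - j) * dl (j - 1)) + (1-\<alpha>) * dl N)"
    using xv_split[of N] f0 fN fm by simp
  also have "\<dots> = (1 - \<alpha>) / dl (N+1) * (LL ^ N + (1 - \<alpha>) * (\<Sum>j=2..N. LL ^ (N + 1 - j) * dl (j - 1)) + dl N)"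
    by (rule alg3)
  finally show ?thesis .
qed

lemma nu_mid: assumes I: "I \<in> {2..N}"
  shows "nu N \<alpha> \<theta> I = (1 - \<alpha>) / dl (N+1) *
        (LL ^ (I - 1) * ph (I+1)
         + (1 - \<alpha>) * (\<Sum>j=2..I-1. LL ^ (I - j) * dl (j - 1) * ph (I+1))
         + (1 - \<alpha>) * (\<Sum>j=I..N. UU ^ (j - I) * dl (I - 1) * ph (j+1))
         + UU ^ (N + 1 - I) * dl (I - 1))"
proof -
  define i where "i = I - 1"
  have iI: "i \<ge> 1" "i < N" using I i_def by auto
  have e1: "I - 1 = i" "I + 1 = i + 2" "N + 1 - I = N - i" using I i_def by auto
  have f0: "FF i 0 = (1-\<alpha>) * (LL ^ (I - 1) * ph (I+1))"
  proof -
    have "Cm N \<alpha> \<theta> $$ (i,0) = LL^i * dl 0 * ph (i+2)" using Cm_gt[of 0 i] iI by simp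
    moreover have "wv $ 0 = 1 - \<alpha>" using wv_entry[of 0] by simp
    ultimately show ?thesis unfolding e1 using dl0 by simp
  qed
  have fN: "FF i N = (1-\<alpha>) * (UU ^ (N + 1 - I) * dl (I - 1))"
  proof -
    have "Cm N \<alpha> \<theta> $$ (i,N) = UU^(N-i) * dl i * ph (N+2)" using Cm_le[of i N] iI by simp
    moreover have "wv $ N = 1 - \<alpha>" using wv_entry[of N] by simp
    ultimately show ?thesis unfolding e1 using ph_N2 by simp
  qed
  have split: "(\<Sum>J=2..N. FF i (J-1)) = (\<Sum>J=2..I-1. FF i (J-1)) + (\<Sum>J=I..N. FF i (J-1))"
    by (rule split_sum_mid) (use I in auto)
  have s1: "(\<Sum>J=2..I-1. FF i (J-1)) = (1-\<alpha>)^2 * (\<Sum>j=2..I-1. LL ^ (I - j) * dl (j - 1) * ph (I+1))"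
    unfolding sum_distrib_left
  proof (rule sum.cong[OF refl])
    fix J assume J: "J \<in> {2..I-1}"
    have J1: "J - 1 < i" "i - (J - 1) = I - J" "J - 1 \<noteq> 0" "J - 1 \<noteq> N" "J - 1 < N + 1" using J iI i_def by auto
    have "Cm N \<alpha> \<theta> $$ (i,J-1) = LL^(I-J) * dl (J-1) * ph (I+1)"
      using Cm_gt[of "J-1" i] J1 iI unfolding e1 by simp
    moreover have "wv $ (J-1) = (1-\<alpha>)^2" using wv_entry[of "J-1"] J1 by simp
    ultimately show "FF i (J-1) = (1-\<alpha>)^2 * (LL ^ (I - J) * dl (J - 1) * ph (I+1))" by simp
  qed
  have s2: "(\<Sum>J=I..N. FF i (J-1)) = (1-\<alpha>)^2 * (\<Sum>j=I..N. UU ^ (j - I) * dl (I - 1) * ph (j+1))"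
    unfolding sum_distrib_left
  proof (rule sum.cong[OF refl])
    fix J assume J: "J \<in> {I..N}"
    have J1: "i \<le> J - 1" "J - 1 - i = J - I" "J - 1 \<noteq> 0" "J - 1 \<noteq> N" "J - 1 < N + 1" "J - 1 + 2 = J + 1"
      using J iI i_def by auto
    have "Cm N \<alpha> \<theta> $$ (i,J-1) = UU^(J-I) * dl (I-1) * ph (J+1)"
      using Cm_le[of i "J-1"] J1 unfolding e1 by simp
    moreover have "wv $ (J-1) = (1-\<alpha>)^2" using wv_entry[of "J-1"] J1 by simp
    ultimately show "FF i (J-1) = (1-\<alpha>)^2 * (UU ^ (J - I) * dl (I - 1) * ph (J+1))" by simp
  qed
  have "nu N \<alpha> \<theta> I = xv $ i" unfolding nu_def nu_vec_eq i_def by simp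
  also have "\<dots> = (1 / dl (N+1)) * ((1-\<alpha>) * (LL ^ (I - 1) * ph (I+1))
       + (1-\<alpha>)^2 * (\<Sum>j=2..I-1. LL ^ (I - j) * dl (j - 1) * ph (I+1))
       + (1-\<alpha>)^2 * (\<Sum>j=I..N. UU ^ (j - I) * dl (I - 1) * ph (j+1))
       + (1-\<alpha>) * (UU ^ (N + 1 - I) * dl (I - 1)))"
    unfolding xv_split[of i, OF iI(2)[THEN less_SucI, unfolded Suc_eq_plus1]] f0 fN split s1 s2 by simp
  also have "\<dots> = (1 - \<alpha>) / dl (N+1) *
        (LL ^ (I - 1) * ph (I+1)
         + (1 - \<alpha>) * (\<Sum>j=2..I-1. LL ^ (I - j) * dl (j - 1) * ph (I+1))
         + (1 - \<alpha>) * (\<Sum>j=I..N. UU ^ (j - I) * dl (I - 1) * ph (j+1))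
         + UU ^ (N + 1 - I) * dl (I - 1))"
    by (rule alg4)
  finally show ?thesis .
qed

end


lemma om_alg:
  fixes a k Q D :: real
  assumes k: "k \<noteq> 0" and D: "D \<noteq> 0" and De: "D = k*(k - a*(k-1))"
  shows "((1-a)*k + a*((a*(k-1)/k) * Q))/D + a*(1 + (1-k)*(((1-a)*k + a*Q)/D))
       = 1 + (1-k)*(((1-a)*k + a*((a*(k-1)/k) * Q))/D)"
proof -
  have "(((1-a)*k + a*((a*(k-1)/k) * Q))/D + a*(1 + (1-k)*(((1-a)*k + a*Q)/D))) * (D*k)
      = (1 + (1-k)*(((1-a)*k + a*((a*(k-1)/k) * Q))/D)) * (D*k)"
    using k D by (simp add: field_simps) (simp add: De algebra_simps)
  thus ?thesis using k D by simp
qed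

lemma om_base:
  fixes a k D :: real
  assumes k: "k \<noteq> 0" and D: "D \<noteq> 0" and De: "D = k*(k - a*(k-1))"
  shows "k * (((1-a)*k + a*1)/D) = 1"
proof -
  have "k * ((1-a)*k + a*1) = D" unfolding De by (simp add: algebra_simps)
  thus ?thesis using D by (simp add: field_simps)
qed

context ctx begin

abbreviation "MO \<equiv> Gamma N \<alpha> - GammaT N \<alpha> + (2*\<theta>) \<cdot>\<^sub>m 1\<^sub>m (N+1)"
abbreviation "qq \<equiv> \<alpha>*(\<kappa>-1)/\<kappa>"
definition "wom i = ((1 - \<alpha>) * \<kappa> + \<alpha> * qq ^ (N - i)) / (\<kappa> * (\<kappa> - \<alpha> * (\<kappa> - 1)))"
definition "Fsm i = (\<Sum>k\<in>{i..<N+1}. \<alpha>^(k-i) * wom k)"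

lemma kpos: "\<kappa> > 0" using th by simp
lemma Dpos: "\<kappa> * (\<kappa> - \<alpha> * (\<kappa> - 1)) > 0"
proof -
  have "\<kappa> - \<alpha> * (\<kappa> - 1) = (1-\<alpha>)*\<kappa> + \<alpha>" by (simp add: field_simps)
  also have "\<dots> > 0" using kpos a0 a1 by (simp add: add_pos_pos)
  finally show ?thesis using kpos by simp
qed
lemma kne: "\<kappa> \<noteq> 0" using kpos by simp
lemma Dne: "\<kappa> * (\<kappa> - \<alpha> * (\<kappa> - 1)) \<noteq> 0" by (metis Dpos order_less_irrefl)
lemma dummy_end: "True" by simp
lemma dummy2: "True"
proof -
  show ?thesis by simp
qed
lemma GammaT_dim[simp]: "dim_row (GammaT N \<alpha>) = N+1" "dim_col (GammaT N \<alpha>) = N+1"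
  unfolding GammaT_def by simp_all
lemma Gamma_dim[simp]: "dim_row (Gamma N \<alpha>) = N+1" "dim_col (Gamma N \<alpha>) = N+1"
  unfolding Gamma_def GammaT_def by simp_all

lemma MO_carrier: "MO \<in> carrier_mat (N+1) (N+1)"
  using Gamma_carrier[of N \<alpha>] GammaT_carrier[of N \<alpha>] by auto

lemma MO_entry: "i < N+1 \<Longrightarrow> j < N+1 \<Longrightarrow> MO $$ (i,j) = (if j < i then 0 else if i = j then \<kappa> else \<alpha>^(j-i))"
  unfolding Gamma_def GammaT_def by auto

lemma det_MO: "det MO \<noteq> 0"
proof -
  have ut: "upper_triangular MO" unfolding upper_triangular_def
    using MO_carrier by (auto simp: MO_entry Gamma_entry GammaT_entry)
  have "det MO = prod_list (diag_mat MO)" by (rule det_upper_triangular[OF ut MO_carrier])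
  also have "\<dots> = (\<Prod>i = 0..<N+1. MO $$ (i,i))" unfolding prod_list_diag_prod using MO_carrier by simp
  also have "\<dots> = (\<Prod>i = 0..<N+1. \<kappa>)" by (rule prod.cong) (auto simp: MO_entry Gamma_entry GammaT_entry)
  also have "\<dots> = \<kappa>^(N+1)" by simp
  finally show ?thesis using kpos by simp
qed

lemma Fsm_step: "i < N+1 \<Longrightarrow> Fsm i = wom i + \<alpha> * Fsm (i+1)"
proof -
  assume i: "i < N+1"
  have "Fsm i = wom i + (\<Sum>k\<in>{Suc i..<N+1}. \<alpha>^(k-i) * wom k)"
    unfolding Fsm_def sum.atLeast_Suc_lessThan[OF i] by simp
  also have "(\<Sum>k\<in>{Suc i..<N+1}. \<alpha>^(k-i) * wom k) = \<alpha> * Fsm (i+1)"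
    unfolding Fsm_def sum_distrib_left
  proof (rule sum.cong)
    fix k assume "k \<in> {i+1..<N+1}"
    hence "k - i = Suc (k - (i+1))" by auto
    thus "\<alpha>^(k-i) * wom k = \<alpha> * (\<alpha>^(k-(i+1)) * wom k)" by simp
  qed simp
  finally show ?thesis .
qed

lemma Fsm_val: "i \<le> N \<Longrightarrow> Fsm i = 1 + (1-\<kappa>) * wom i"
proof (induction "N - i" arbitrary: i)
  case 0
  hence iN: "i = N" by simp
  have "Fsm (N+1) = 0" unfolding Fsm_def by simp
  hence "Fsm N = wom N" using Fsm_step[of N] by simp
  moreover have "\<kappa> * wom N = 1" unfolding wom_def using om_base[OF kne Dne refl] by simp
  ultimately show ?case using iN by (simp add: algebra_simps)
next
  case (Suc m)
  have i: "i < N" using Suc by simp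
  have IH: "Fsm (i+1) = 1 + (1-\<kappa>) * wom (i+1)" using Suc.hyps(1)[of "i+1"] Suc.hyps(2) i by simp
  have e: "N - i = Suc (N - (i+1))" using i by simp
  have "Fsm i = wom i + \<alpha> * (1 + (1-\<kappa>) * wom (i+1))" using Fsm_step[of i] IH i by simp
  also have "\<dots> = 1 + (1-\<kappa>) * wom i"
    unfolding wom_def e power_Suc by (rule om_alg[OF kne Dne refl])
  finally show ?case .
qed

definition "wwv = vec (N+1) wom"

lemma MO_wwv: "MO *\<^sub>v wwv = onev (N+1)"
proof (rule eq_vecI)
  fix i assume "i < dim_vec (onev (N+1))"
  hence i: "i < N+1" by (simp add: onev_def)
  let ?g = "\<lambda>k. MO $$ (i,k) * wwv $ k"
  have "(MO *\<^sub>v wwv) $ i = (\<Sum>k<N+1. ?g k)"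
    by (rule mat_vec_entry[OF MO_carrier _ i]) (simp add: wwv_def)
  also have "\<dots> = (\<Sum>k\<in>{i..<N+1}. ?g k)"
    by (rule sum.mono_neutral_right) (use i in \<open>auto simp: MO_entry Gamma_entry GammaT_entry\<close>)
  also have "\<dots> = ?g i + (\<Sum>k\<in>{Suc i..<N+1}. ?g k)" by (rule sum.atLeast_Suc_lessThan[OF i])
  also have "(\<Sum>k\<in>{Suc i..<N+1}. ?g k) = (\<Sum>k\<in>{Suc i..<N+1}. \<alpha>^(k-i) * wom k)"
    by (rule sum.cong) (auto simp: MO_entry Gamma_entry GammaT_entry wwv_def)
  also have "\<dots> = Fsm i - wom i" unfolding Fsm_def sum.atLeast_Suc_lessThan[OF i] by simp
  also have "?g i = \<kappa> * wom i" using i by (simp add: MO_entry Gamma_entry GammaT_entry wwv_def)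
  finally have "(MO *\<^sub>v wwv) $ i = \<kappa> * wom i + (Fsm i - wom i)" .
  also have "\<dots> = 1" using Fsm_val[of i] i by (simp add: algebra_simps)
  finally show "(MO *\<^sub>v wwv) $ i = onev (N+1) $ i" using i by (simp add: onev_def)
qed (use MO_carrier in \<open>simp add: onev_def\<close>)

lemma omega_vec_eq: "omega_vec N \<alpha> \<theta> = wwv"
  unfolding omega_vec_def using minv_solve[OF MO_carrier det_MO _ MO_wwv] by (simp add: onev_def wwv_def)

lemma omega_val: "i \<in> {1..N+1} \<Longrightarrow> omega N \<alpha> \<theta> i =
   ((1 - \<alpha>) * \<kappa> + \<alpha> * qq ^ (N + 1 - i)) / (\<kappa> * (\<kappa> - \<alpha> * (\<kappa> - 1)))"
  unfolding omega_def omega_vec_eq wwv_def wom_def by auto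

lemma wom_N: "\<kappa> * wom N = 1" unfolding wom_def using om_base[OF kne Dne refl] by simp

lemma omega_last: "omega N \<alpha> \<theta> (N+1) = 1 / \<kappa>"
proof -
  have "omega N \<alpha> \<theta> (N+1) = wom N" unfolding omega_def omega_vec_eq wwv_def by simp
  also have "\<dots> = 1 / \<kappa>" using wom_N kne by (simp add: eq_divide_eq mult.commute)
  finally show ?thesis .
qed

end


theorem theorem5p4:
  fixes \<rho> T \<theta> :: real and N :: nat
  assumes "\<rho> > 0" "T > 0" "\<theta> \<ge> 0" "N \<ge> 2"
  defines "\<alpha> \<equiv> exp (- \<rho> * T / real N)"
  defines "\<kappa> \<equiv> 2 * \<theta> + 1/2"
  shows "(\<forall>i\<in>{1..N+1}. omega N \<alpha> \<theta> i =
           ((1 - \<alpha>) * \<kappa> + \<alpha> * (\<alpha> * (\<kappa> - 1) / \<kappa>) ^ (N + 1 - i))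
             / (\<kappa> * (\<kappa> - \<alpha> * (\<kappa> - 1))))
    \<and> omega N \<alpha> \<theta> (N+1) = 1 / \<kappa>
    \<and> nu N \<alpha> \<theta> 1 = (1 - \<alpha>) / delta N \<alpha> \<theta> (N+1) *
        (phi N \<alpha> \<kappa> 2 + (1 - \<alpha>) * (\<Sum>j=2..N. (\<alpha> * \<kappa>) ^ (j - 1) * phi N \<alpha> \<kappa> (j+1))
         + (\<alpha> * \<kappa>) ^ N)
    \<and> nu N \<alpha> \<theta> (N+1) = (1 - \<alpha>) / delta N \<alpha> \<theta> (N+1) *
        ((\<alpha> * (\<kappa> - 1)) ^ N
         + (1 - \<alpha>) * (\<Sum>j=2..N. (\<alpha> * (\<kappa> - 1)) ^ (N + 1 - j) * delta N \<alpha> \<theta> (j - 1))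
         + delta N \<alpha> \<theta> N)
    \<and> (\<forall>i\<in>{2..N}. nu N \<alpha> \<theta> i = (1 - \<alpha>) / delta N \<alpha> \<theta> (N+1) *
        ((\<alpha> * (\<kappa> - 1)) ^ (i - 1) * phi N \<alpha> \<kappa> (i+1)
         + (1 - \<alpha>) * (\<Sum>j=2..i-1. (\<alpha> * (\<kappa> - 1)) ^ (i - j) * delta N \<alpha> \<theta> (j - 1) * phi N \<alpha> \<kappa> (i+1))
         + (1 - \<alpha>) * (\<Sum>j=i..N. (\<alpha> * \<kappa>) ^ (j - i) * delta N \<alpha> \<theta> (i - 1) * phi N \<alpha> \<kappa> (j+1))
         + (\<alpha> * \<kappa>) ^ (N + 1 - i) * delta N \<alpha> \<theta> (i - 1)))"
proof -
  have a0: "0 < \<alpha>" unfolding \<alpha>_def by simp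
  have "- \<rho> * T / real N < 0" using assms by (simp add: divide_neg_pos mult_pos_pos)
  hence a1: "\<alpha> < 1" unfolding \<alpha>_def by simp
  interpret ctx N \<alpha> \<theta> by (unfold_locales) (use a0 a1 assms in auto)
  show ?thesis unfolding \<kappa>_def
    using omega_val omega_last nu_1 nu_N1 nu_mid by blast
qed

end
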